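(* Let $h\ge2$, $L\in\mathbb{N}$, $\beta>0$, $\lambda\ge0$, $f,g:\mathbb{Z}^2\to\mathbb{R}$, let $\mathcal W:(\mathbb{Z}^2)^h\to(0,\infty)$ be any weight and $p,q\in(1,\infty)$ with $\frac1p+\frac1q=1$. Then for every $r\in\mathbb{N}$, $$\Xi(r)\le\Big(\max_{I\ne*}\big\|\widehat{\mathsf q}^{|f|,I}_L\tfrac1{\mathcal W}\big\|_{\ell^p}\Big)\Big(\max_{J\ne*}\big\|\mathcal W\,\overline{\mathsf q}^{|g|,J}_L\big\|_{\ell^q}\Big)\,\Xi^{\mathrm{bulk}}(r),$$ where $$\Xi^{\mathrm{bulk}}(r):=\sum_{\substack{I_1,\dots,I_r\vdash\{1,\dots,h\}\ \text{full support},\\ I_i\ne I_{i-1},\ I_i\ne*}}\Big\{\prod_{i=1}^r|\mathbb{E}[\xi^{I_i}_\beta]|\Big\}\Big(\max_{I,J\ne*,\,I\ne J}\big\|\mathcal W\widehat{\mathsf Q}^{I,J}_L\tfrac1{\mathcal W}\big\|_{\ell^q\to\ell^q}\Big)^{r-1}\Big(\max_{I\ne*}\big\|\mathcal W|\widehat{\mathsf U}|^I_{L,\lambda,\beta}\tfrac1{\mathcal W}\big\|_{\ell^q\to\ell^q}\Big)^r.$$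
   Context: Same setting as follows. $S$ simple random walk on $\mathbb{Z}^2$, $q_n(x):=\mathrm{P}(S_n=x\mid S_0=0)$, $q^f_n(x):=\sum_zq_n(x-z)f(z)$. $\omega$ i.i.d. independent of $S$ with mean $0$, variance $1$, $\lambda(\beta):=\log\mathbb{E}e^{\beta\omega}<\infty$; $\xi_\beta:=e^{\beta\omega-\lambda(\beta)}-1$. Partitions $I\vdash\{1,\dots,h\}$, $*$ = all singletons; $\mathbf x\sim I$: $x^a=x^b$ for $a,b$ in a common block, $x^a\ne x^b$ for $a,b$ in distinct blocks of size $\ge2$; full support: each $a$ lies in a block of size $\ge2$ of some $I_i$; $\mathbb{E}[\xi^J_\beta]:=\prod_{i:|J^i|\ge2}\mathbb{E}[\xi^{|J^i|}_\beta]$ for $J\ne*$. $\mathsf Q^{I,J}_n(\mathbf z,\mathbf x):=\mathbf 1_{\{\mathbf z\sim I,\mathbf x\sim J\}}\prod_iq_n(x^i-z^i)$, $\mathsf q^{f,J}_n(\mathbf x):=\mathbf 1_{\{\mathbf x\sim J\}}\prod_iq^f_n(x^i)$, $\widehat{\mathsf Q}^{I,J}_L:=\sum_{n=1}^L\mathsf Q^{I,J}_n$, $\widehat{\mathsf q}^{f,I}_L:=\sum_{n=1}^L\mathsf q^{f,I}_n$, $\overline{\mathsf q}^{g,J}_L(\mathbf z):=\max_{1\le n\le L}\mathsf q^{g,J}_n(\mathbf z)$; $|\mathsf U|^J_{m,\beta}(\mathbf z,\mathbf x):=\sum_{k\ge1}|\mathbb{E}\xi^J_\beta|^k\sum_{0=n_0<\dots<n_k=m}\sum_{\mathbf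 y_1..\mathbf y_{k-1}}\prod_{i}\mathsf Q^{J,J}_{n_i-n_{i-1}}(\mathbf y_{i-1},\mathbf y_i)$ ($\mathbf y_0=\mathbf z$, $\mathbf y_k=\mathbf x$), $|\widehat{\mathsf U}|^J_{L,\lambda,\beta}(\mathbf z,\mathbf x):=\mathbf 1_{\{\mathbf z=\mathbf x\sim J\}}+\sum_{m=1}^Le^{-\lambda m}|\mathsf U|^J_{m,\beta}(\mathbf z,\mathbf x)$. $\Xi(r):=\sum_{I_1..I_r\ \text{full support},\ I_i\ne I_{i-1},I_i\ne*}\{\prod_i|\mathbb{E}\xi^{I_i}_\beta|\}\sum_{\mathbf z_i,\mathbf z_i'}\widehat{\mathsf q}^{|f|,I_1}_L(\mathbf z_1)|\widehat{\mathsf U}|^{I_1}_{L,\lambda,\beta}(\mathbf z_1,\mathbf z_1')\prod_{i=2}^r\widehat{\mathsf Q}^{I_{i-1},I_i}_L(\mathbf z'_{i-1},\mathbf z_i)|\widehat{\mathsf U}|^{I_i}_{L,\lambda,\beta}(\mathbf z_i,\mathbf z_i')\,\overline{\mathsf q}^{|g|,I_r}_L(\mathbf z_r')$. Norms: $\|F\|_{\ell^p}:=(\sum|F|^p)^{1/p}$ on $(\mathbb{Z}^2)^h$; a kernel $\mathsf A(\mathbf z,\mathbf x)$ acts by $(\mathsf Ag)(\mathbf z)=\sum_{\mathbf x}\mathsf A(\mathbf z,\mathbf x)g(\mathbf x)$, $\|\mathsf A\|_{\ell^q\to\ell^q}$ is its operator norm; $(\mathcal W\mathsf A\tfrac1{\mathcal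 W})(\mathbf z,\mathbf x):=\mathcal W(\mathbf z)\mathsf A(\mathbf z,\mathbf x)/\mathcal W(\mathbf x)$, and $\widehat{\mathsf q}\tfrac1{\mathcal W}$, $\mathcal W\overline{\mathsf q}$ are pointwise products. *)

theory Defs
  imports "HOL-Probability.Probability"
begin

type_synonym pt = "int \<times> int"
type_synonym cfg = "nat \<Rightarrow> int \<times> int"  (* a point of (Z^2)^h, coordinates 1..h *)

definition cfgs :: "nat \<Rightarrow> cfg set" where
  "cfgs h = PiE {1..h} (\<lambda>_. UNIV)"

definition pdiff :: "pt \<Rightarrow> pt \<Rightarrow> pt" where
  "pdiff x z = (fst x - fst z, snd x - snd z)"

definition srw_step :: "pt pmf" where
  "srw_step = pmf_of_set {(1,0), (-1,0), (0,1), (0,-1)}"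

fun srw :: "nat \<Rightarrow> pt pmf" where
  "srw 0 = return_pmf (0,0)"
| "srw (Suc n) = bind_pmf (srw n) (\<lambda>y. map_pmf (\<lambda>e. (fst y + fst e, snd y + snd e)) srw_step)"

definition qrw :: "nat \<Rightarrow> pt \<Rightarrow> real" where
  "qrw n x = pmf (srw n) x"

(* q^F_n(x) = sum_z q_n(x-z) F(z), for nonnegative F (used with F = |f|) *)
definition qf :: "(pt \<Rightarrow> real) \<Rightarrow> nat \<Rightarrow> pt \<Rightarrow> ennreal" where
  "qf F n x = (\<Sum>\<^sub>\<infinity>z. ennreal (qrw n (pdiff x z) * F z))"

definition partitions :: "nat \<Rightarrow> nat set set set" where
  "partitions h = {I. partition_on {1..h} I}"

definition star :: "nat \<Rightarrow> nat set set" where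
  "star h = (\<lambda>a. {a}) ` {1..h}"

definition sim :: "cfg \<Rightarrow> nat set set \<Rightarrow> bool" where
  "sim x J \<longleftrightarrow> (\<forall>B\<in>J. \<forall>a\<in>B. \<forall>b\<in>B. x a = x b) \<and>
     (\<forall>B1\<in>J. \<forall>B2\<in>J. B1 \<noteq> B2 \<and> 2 \<le> card B1 \<and> 2 \<le> card B2 \<longrightarrow>
        (\<forall>a\<in>B1. \<forall>b\<in>B2. x a \<noteq> x b))"

definition QQ :: "nat \<Rightarrow> nat set set \<Rightarrow> nat set set \<Rightarrow> nat \<Rightarrow> cfg \<Rightarrow> cfg \<Rightarrow> ennreal" where
  "QQ h I J n z x = (if sim z I \<and> sim x J
      then ennreal (\<Prod>i\<in>{1..h}. qrw n (pdiff (x i) (z i))) else 0)"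

definition qqf :: "nat \<Rightarrow> (pt \<Rightarrow> real) \<Rightarrow> nat set set \<Rightarrow> nat \<Rightarrow> cfg \<Rightarrow> ennreal" where
  "qqf h F J n x = (if sim x J then (\<Prod>i\<in>{1..h}. qf F n (x i)) else 0)"

definition QQhat :: "nat \<Rightarrow> nat set set \<Rightarrow> nat set set \<Rightarrow> nat \<Rightarrow> cfg \<Rightarrow> cfg \<Rightarrow> ennreal" where
  "QQhat h I J L z x = (\<Sum>n\<in>{1..L}. QQ h I J n z x)"

definition qqhat :: "nat \<Rightarrow> (pt \<Rightarrow> real) \<Rightarrow> nat set set \<Rightarrow> nat \<Rightarrow> cfg \<Rightarrow> ennreal" where
  "qqhat h F I L x = (\<Sum>n\<in>{1..L}. qqf h F I n x)"

definition qqbar :: "nat \<Rightarrow> (pt \<Rightarrow> real) \<Rightarrow> nat set set \<Rightarrow> nat \<Rightarrow> cfg \<Rightarrow> ennreal" where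
  "qqbar h F J L x = (SUP n\<in>{1..L}. qqf h F J n x)"

definition lamb :: "real measure \<Rightarrow> real \<Rightarrow> real" where
  "lamb M \<beta> = ln (\<integral>\<omega>. exp (\<beta> * \<omega>) \<partial>M)"

definition xi_mom :: "real measure \<Rightarrow> real \<Rightarrow> nat \<Rightarrow> real" where
  "xi_mom M \<beta> k = (\<integral>\<omega>. (exp (\<beta> * \<omega> - lamb M \<beta>) - 1) ^ k \<partial>M)"

definition Exi :: "real measure \<Rightarrow> real \<Rightarrow> nat set set \<Rightarrow> real" where
  "Exi M \<beta> J = (\<Prod>B\<in>{B\<in>J. 2 \<le> card B}. xi_mom M \<beta> (card B))"

(* chain h J k m z x = sum over 0=n_0<...<n_k=m and y_1..y_{k-1} of prod Q^{J,J}_{n_i-n_{i-1}}(y_{i-1},y_i) *)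
fun chain :: "nat \<Rightarrow> nat set set \<Rightarrow> nat \<Rightarrow> nat \<Rightarrow> cfg \<Rightarrow> cfg \<Rightarrow> ennreal" where
  "chain h J 0 m z x = (if m = 0 \<and> z = x then 1 else 0)"
| "chain h J (Suc k) m z x =
     (\<Sum>n\<in>{1..m}. \<Sum>\<^sub>\<infinity>y\<in>cfgs h. QQ h J J n z y * chain h J k (m - n) y x)"

definition Uabs :: "real measure \<Rightarrow> real \<Rightarrow> nat \<Rightarrow> nat set set \<Rightarrow> nat \<Rightarrow> cfg \<Rightarrow> cfg \<Rightarrow> ennreal" where
  "Uabs M \<beta> h J m z x = (\<Sum>\<^sub>\<infinity>k\<in>{1..}. ennreal (\<bar>Exi M \<beta> J\<bar> ^ k) * chain h J k m z x)"

definition Uhat :: "real measure \<Rightarrow> real \<Rightarrow> nat \<Rightarrow> nat set set \<Rightarrow> nat \<Rightarrow> real \<Rightarrow> cfg \<Rightarrow> cfg \<Rightarrow> ennreal" where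
  "Uhat M \<beta> h J L lam z x = (if z = x \<and> sim x J then 1 else 0)
      + (\<Sum>m\<in>{1..L}. ennreal (exp (- lam * real m)) * Uabs M \<beta> h J m z x)"

definition full_support :: "nat \<Rightarrow> nat set set list \<Rightarrow> bool" where
  "full_support h Is \<longleftrightarrow> (\<forall>a\<in>{1..h}. \<exists>I\<in>set Is. \<exists>B\<in>I. a \<in> B \<and> 2 \<le> card B)"

(* admissible sequences I_1..I_r (stored as Is!0 .. Is!(r-1)) *)
definition admissible :: "nat \<Rightarrow> nat \<Rightarrow> nat set set list set" where
  "admissible h r = {Is. length Is = r \<and> set Is \<subseteq> partitions h \<and> (\<forall>I\<in>set Is. I \<noteq> star h)
       \<and> full_support h Is \<and> (\<forall>i. 0 < i \<and> i < r \<longrightarrow> Is ! i \<noteq> Is ! (i - 1))}"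

definition Xi :: "real measure \<Rightarrow> real \<Rightarrow> nat \<Rightarrow> nat \<Rightarrow> real \<Rightarrow> (pt \<Rightarrow> real) \<Rightarrow> (pt \<Rightarrow> real) \<Rightarrow> nat \<Rightarrow> ennreal" where
  "Xi M \<beta> h L lam f g r =
    (\<Sum>Is\<in>admissible h r. ennreal (\<Prod>i<r. \<bar>Exi M \<beta> (Is ! i)\<bar>) *
      (\<Sum>\<^sub>\<infinity>(zs, zs')\<in>PiE {..<r} (\<lambda>_. cfgs h) \<times> PiE {..<r} (\<lambda>_. cfgs h).
         qqhat h (\<lambda>z. \<bar>f z\<bar>) (Is ! 0) L (zs 0) * Uhat M \<beta> h (Is ! 0) L lam (zs 0) (zs' 0) *
         (\<Prod>i\<in>{1..<r}. QQhat h (Is ! (i - 1)) (Is ! i) L (zs' (i - 1)) (zs i) *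
                         Uhat M \<beta> h (Is ! i) L lam (zs i) (zs' i)) *
         qqbar h (\<lambda>z. \<bar>g z\<bar>) (Is ! (r - 1)) L (zs' (r - 1))))"

definition epowr :: "ennreal \<Rightarrow> real \<Rightarrow> ennreal" where
  "epowr x a = (if x = \<top> then \<top> else ennreal (enn2real x powr a))"

definition lpnorm :: "nat \<Rightarrow> real \<Rightarrow> (cfg \<Rightarrow> ennreal) \<Rightarrow> ennreal" where
  "lpnorm h p F = epowr (\<Sum>\<^sub>\<infinity>x\<in>cfgs h. epowr (F x) p) (1 / p)"

definition opnorm :: "nat \<Rightarrow> real \<Rightarrow> (cfg \<Rightarrow> cfg \<Rightarrow> ennreal) \<Rightarrow> ennreal" where
  "opnorm h q K = (SUP G\<in>{G. lpnorm h q G \<le> 1}. lpnorm h q (\<lambda>z. \<Sum>\<^sub>\<infinity>x\<in>cfgs h. K z x * G x))"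

definition nonstar :: "nat \<Rightarrow> nat set set set" where
  "nonstar h = partitions h - {star h}"

definition fnormmax :: "nat \<Rightarrow> nat \<Rightarrow> real \<Rightarrow> (pt \<Rightarrow> real) \<Rightarrow> (cfg \<Rightarrow> real) \<Rightarrow> ennreal" where
  "fnormmax h L p f W = (SUP I\<in>nonstar h.
      lpnorm h p (\<lambda>x. qqhat h (\<lambda>z. \<bar>f z\<bar>) I L x * ennreal (1 / W x)))"

definition gnormmax :: "nat \<Rightarrow> nat \<Rightarrow> real \<Rightarrow> (pt \<Rightarrow> real) \<Rightarrow> (cfg \<Rightarrow> real) \<Rightarrow> ennreal" where
  "gnormmax h L q g W = (SUP J\<in>nonstar h.
      lpnorm h q (\<lambda>x. ennreal (W x) * qqbar h (\<lambda>z. \<bar>g z\<bar>) J L x))"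

definition Qnormmax :: "nat \<Rightarrow> nat \<Rightarrow> real \<Rightarrow> (cfg \<Rightarrow> real) \<Rightarrow> ennreal" where
  "Qnormmax h L q W = (SUP IJ\<in>{(I, J). I \<in> nonstar h \<and> J \<in> nonstar h \<and> I \<noteq> J}.
      opnorm h q (\<lambda>z x. ennreal (W z) * QQhat h (fst IJ) (snd IJ) L z x * ennreal (1 / W x)))"

definition Unormmax :: "real measure \<Rightarrow> real \<Rightarrow> nat \<Rightarrow> nat \<Rightarrow> real \<Rightarrow> real \<Rightarrow> (cfg \<Rightarrow> real) \<Rightarrow> ennreal" where
  "Unormmax M \<beta> h L lam q W = (SUP I\<in>nonstar h.
      opnorm h q (\<lambda>z x. ennreal (W z) * Uhat M \<beta> h I L lam z x * ennreal (1 / W x)))"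

definition Xi_bulk :: "real measure \<Rightarrow> real \<Rightarrow> nat \<Rightarrow> nat \<Rightarrow> real \<Rightarrow> real \<Rightarrow> (cfg \<Rightarrow> real) \<Rightarrow> nat \<Rightarrow> ennreal" where
  "Xi_bulk M \<beta> h L lam q W r =
    (\<Sum>Is\<in>admissible h r. ennreal (\<Prod>i<r. \<bar>Exi M \<beta> (Is ! i)\<bar>) *
       Qnormmax h L q W ^ (r - 1) * Unormmax M \<beta> h L lam q W ^ r)"

end

theory Submission
  imports Defs
begin


lemma esummable: "(f::_ \<Rightarrow> ennreal) summable_on S"
  by (simp add: nonneg_summable_on_complete)

lemma esum_le_infsum:
  fixes f :: "'a \<Rightarrow> ennreal"
  assumes "finite F" "F \<subseteq> A"
  shows "sum f F \<le> infsum f A"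
  using assms by (subst nonneg_infsum_complete[of A f]) (auto intro!: SUP_upper)

lemma einfsum_zeroD:
  fixes f :: "'a \<Rightarrow> ennreal"
  assumes "infsum f A = 0" "x \<in> A"
  shows "f x = 0"
  using esum_le_infsum[of "{x}" A f] assms by simp

lemma einfsum_cmult_left:
  fixes f :: "'a \<Rightarrow> ennreal"
  shows "infsum (\<lambda>x. c * f x) A = c * infsum f A"
proof -
  have "infsum (\<lambda>x. c * f x) A = (SUP F\<in>{F. finite F \<and> F\<subseteq>A}. sum (\<lambda>x. c * f x) F)"
    by (rule nonneg_infsum_complete) auto
  also have "\<dots> = (SUP F\<in>{F. finite F \<and> F\<subseteq>A}. c * sum f F)"
    by (simp add: sum_distrib_left)
  also have "\<dots> = c * (SUP F\<in>{F. finite F \<and> F\<subseteq>A}. sum f F)"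
    by (simp add: SUP_mult_left_ennreal)
  also have "\<dots> = c * infsum f A"
    by (subst nonneg_infsum_complete[of A f]) auto
  finally show ?thesis .
qed

lemma einfsum_Sigma_le:
  fixes f :: "'a \<times> 'b \<Rightarrow> ennreal"
  shows "infsum f (Sigma A B) \<le> infsum (\<lambda>x. infsum (\<lambda>y. f (x, y)) (B x)) A"
proof -
  have "sum f F \<le> infsum (\<lambda>x. infsum (\<lambda>y. f (x, y)) (B x)) A"
    if F: "finite F" "F \<subseteq> Sigma A B" for F
  proof -
    define X where "X = fst ` F"
    define Y where "Y x = {y. (x, y) \<in> F}" for x
    have fX: "finite X" using F by (simp add: X_def)
    have fY: "finite (Y x)" for x
    proof -
      have "Y x \<subseteq> snd ` F" by (force simp: Y_def)
      then show ?thesis using F finite_subset by blast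
    qed
    have FS: "F = Sigma X Y" by (force simp: X_def Y_def)
    have "sum f F = (\<Sum>x\<in>X. \<Sum>y\<in>Y x. f (x, y))"
      unfolding FS using fX fY by (simp add: sum.Sigma)
    also have "\<dots> \<le> (\<Sum>x\<in>X. infsum (\<lambda>y. f (x, y)) (B x))"
    proof (rule sum_mono)
      fix x assume "x \<in> X"
      have "Y x \<subseteq> B x" using F by (auto simp: Y_def)
      then show "(\<Sum>y\<in>Y x. f (x, y)) \<le> infsum (\<lambda>y. f (x, y)) (B x)"
        using esum_le_infsum fY by blast
    qed
    also have "\<dots> \<le> infsum (\<lambda>x. infsum (\<lambda>y. f (x, y)) (B x)) A"
      by (rule esum_le_infsum) (use fX F in \<open>auto simp: X_def\<close>)
    finally show ?thesis .
  qed
  then show ?thesis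
    by (subst nonneg_infsum_complete[of "Sigma A B" f]) (auto intro!: SUP_least)
qed

lemma einfsum_mono:
  fixes f g :: "'a \<Rightarrow> ennreal"
  assumes "\<And>x. x \<in> A \<Longrightarrow> f x \<le> g x"
  shows "infsum f A \<le> infsum g A"
  by (rule infsum_mono) (auto simp: assms intro: esummable)

lemma einfsum_add:
  fixes f g :: "'a \<Rightarrow> ennreal"
  shows "infsum (\<lambda>x. f x + g x) A = infsum f A + infsum g A"
  by (rule infsum_add) (auto intro: esummable)

lemma einfsum_indicator:
  fixes c :: ennreal
  assumes "x \<in> A"
  shows "infsum (\<lambda>y. if y = x then c else 0) A = c"
proof -
  have "infsum (\<lambda>y. if y = x then c else 0) A = infsum (\<lambda>y. if y = x then c else 0) {x}"
    by (rule infsum_cong_neutral) (use assms in auto)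
  then show ?thesis by simp
qed

lemma epowr_top[simp]: "epowr \<top> a = \<top>" by (simp add: epowr_def)

lemma epowr_ennreal: "t \<ge> 0 \<Longrightarrow> epowr (ennreal t) a = ennreal (t powr a)"
  by (simp add: epowr_def)

lemma epowr_zero[simp]: "epowr 0 a = 0" by (simp add: epowr_def)
lemma epowr_one[simp]: "epowr 1 a = 1" by (simp add: epowr_def)

lemma epowr_eq_0_iff: "epowr y a = 0 \<longleftrightarrow> y = 0"
proof (cases "y = \<top>")
  case False
  then obtain t where t: "y = ennreal t" "t \<ge> 0" by (cases y) auto
  then show ?thesis by (simp add: epowr_def)
qed simp

lemma epowr_mult:
  assumes "c > 0"
  shows "epowr (ennreal c * y) a = ennreal (c powr a) * epowr y a"
proof (cases "y = \<top>")
  case True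
  then show ?thesis using assms by (simp add: ennreal_mult_top)
next
  case False
  then obtain t where t: "y = ennreal t" "t \<ge> 0" by (cases y) auto
  have "ennreal c * y = ennreal (c * t)" using t assms by (simp add: ennreal_mult)
  then have "epowr (ennreal c * y) a = ennreal (c powr a * t powr a)"
    using t assms by (simp add: epowr_ennreal powr_mult)
  also have "\<dots> = ennreal (c powr a) * epowr y a"
    using t by (simp add: epowr_ennreal ennreal_mult)
  finally show ?thesis .
qed

lemma epowr_epowr:
  assumes "a > 0"
  shows "epowr (epowr y a) (1 / a) = y"
proof (cases "y = \<top>")
  case False
  then obtain t where t: "y = ennreal t" "t \<ge> 0" by (cases y) auto
  then show ?thesis using assms by (simp add: epowr_def powr_powr)
qed simp



lemma lpnorm_cong:
  assumes "\<And>x. x \<in> cfgs h \<Longrightarrow> F x = G x"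
  shows "lpnorm h p F = lpnorm h p G"
  unfolding lpnorm_def using assms by (metis (mono_tags, lifting) infsum_cong)

lemma einfsum_eq_0_iff:
  fixes f :: "'a \<Rightarrow> ennreal"
  shows "infsum f A = 0 \<longleftrightarrow> (\<forall>x\<in>A. f x = 0)"
  using einfsum_zeroD infsum_0 by metis

lemma lpnorm_eq_0_iff:
  shows "lpnorm h p F = 0 \<longleftrightarrow> (\<forall>x\<in>cfgs h. F x = 0)"
  unfolding lpnorm_def epowr_eq_0_iff einfsum_eq_0_iff by simp

lemma lpnorm_cmult:
  assumes "c > 0" "p > 0"
  shows "lpnorm h p (\<lambda>x. ennreal c * F x) = ennreal c * lpnorm h p F"
proof -
  have "infsum (\<lambda>x. epowr (ennreal c * F x) p) (cfgs h)
      = infsum (\<lambda>x. ennreal (c powr p) * epowr (F x) p) (cfgs h)"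
    using assms by (simp add: epowr_mult)
  also have "\<dots> = ennreal (c powr p) * infsum (\<lambda>x. epowr (F x) p) (cfgs h)"
    by (rule einfsum_cmult_left)
  finally have "lpnorm h p (\<lambda>x. ennreal c * F x)
      = epowr (ennreal (c powr p) * infsum (\<lambda>x. epowr (F x) p) (cfgs h)) (1 / p)"
    unfolding lpnorm_def by simp
  also have "\<dots> = ennreal ((c powr p) powr (1 / p)) * epowr (infsum (\<lambda>x. epowr (F x) p) (cfgs h)) (1 / p)"
    using assms by (simp add: epowr_mult)
  also have "(c powr p) powr (1 / p) = c"
    using assms by (simp add: powr_powr)
  finally show ?thesis unfolding lpnorm_def by simp
qed

lemma young_real:
  fixes u v a b p q :: real
  assumes pq: "p > 1" "q > 1" "1 / p + 1 / q = 1"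
    and uv: "u \<ge> 0" "v \<ge> 0" and ab: "a > 0" "b > 0"
  shows "u * v \<le> a * b / (p * a powr p) * u powr p + a * b / (q * b powr q) * v powr q"
proof -
  have "u / a * (v / b) \<le> (u / a) powr p / p + (v / b) powr q / q"
    using Youngs_inequality[OF pq, of "u / a" "v / b"] uv ab by simp
  then have "a * b * (u / a * (v / b)) \<le> a * b * ((u / a) powr p / p + (v / b) powr q / q)"
    using ab by (intro mult_left_mono) auto
  moreover have "a * b * (u / a * (v / b)) = u * v" using ab by (simp add: field_simps)
  moreover have "a * b * ((u / a) powr p / p + (v / b) powr q / q)
      = a * b / (p * a powr p) * u powr p + a * b / (q * b powr q) * v powr q"
    using ab uv by (simp add: powr_divide field_simps)
  ultimately show ?thesis by simp
qed

lemma holder: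
  fixes F G :: "'a \<Rightarrow> ennreal"
  assumes pq: "p > 1" "q > 1" "1 / p + 1 / q = 1"
  shows "infsum (\<lambda>x. F x * G x) A \<le>
    epowr (infsum (\<lambda>x. epowr (F x) p) A) (1 / p) * epowr (infsum (\<lambda>x. epowr (G x) q) A) (1 / q)"
    (is "?L \<le> epowr ?SF _ * epowr ?SG _")
proof (cases "?SF = 0 \<or> ?SG = 0")
  case True
  then have "\<forall>x\<in>A. F x * G x = 0"
    by (auto simp: einfsum_eq_0_iff epowr_eq_0_iff)
  then have "?L = 0" by (simp add: einfsum_eq_0_iff)
  then show ?thesis by simp
next
  case False
  then have nz: "?SF \<noteq> 0" "?SG \<noteq> 0" by auto
  have e1: "epowr ?SF (1 / p) \<noteq> 0" "epowr ?SG (1 / q) \<noteq> 0"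
    using nz by (auto simp: epowr_eq_0_iff)
  show ?thesis
  proof (cases "?SF = \<top> \<or> ?SG = \<top>")
    case True
    then have "epowr ?SF (1 / p) * epowr ?SG (1 / q) = \<top>"
      using e1 by (auto simp: ennreal_mult_eq_top_iff)
    then show ?thesis by simp
  next
    case False
    obtain sf where sf: "?SF = ennreal sf" "sf > 0"
      using False nz by (cases ?SF) (auto simp: ennreal_eq_0_iff)
    obtain sg where sg: "?SG = ennreal sg" "sg > 0"
      using False nz by (cases ?SG) (auto simp: ennreal_eq_0_iff)
    define a where "a = sf powr (1 / p)"
    define b where "b = sg powr (1 / q)"
    have a: "a > 0" "a powr p = sf" using sf pq by (auto simp: a_def powr_powr)
    have b: "b > 0" "b powr q = sg" using sg pq by (auto simp: b_def powr_powr)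
    define c1 where "c1 = a * b / (p * sf)"
    define c2 where "c2 = a * b / (q * sg)"
    have c12: "c1 \<ge> 0" "c2 \<ge> 0" using a b sf sg pq by (auto simp: c1_def c2_def)
    have pw: "F x * G x \<le> ennreal c1 * epowr (F x) p + ennreal c2 * epowr (G x) q"
      if x: "x \<in> A" for x
    proof -
      have "epowr (F x) p \<le> ?SF"
        using esum_le_infsum[of "{x}" A "\<lambda>x. epowr (F x) p"] x by simp
      then have "F x \<noteq> \<top>" using sf by (auto simp: top_unique)
      then obtain u where u: "F x = ennreal u" "u \<ge> 0" by (cases "F x") auto
      have "epowr (G x) q \<le> ?SG"
        using esum_le_infsum[of "{x}" A "\<lambda>x. epowr (G x) q"] x by simp
      then have "G x \<noteq> \<top>" using sg by (auto simp: top_unique)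
      then obtain v where v: "G x = ennreal v" "v \<ge> 0" by (cases "G x") auto
      have "u * v \<le> c1 * u powr p + c2 * v powr q"
        using young_real[OF pq u(2) v(2) a(1) b(1)] a b by (simp add: c1_def c2_def)
      then have "ennreal (u * v) \<le> ennreal (c1 * u powr p + c2 * v powr q)"
        by (rule ennreal_leI)
      moreover have "ennreal (c1 * u powr p + c2 * v powr q) = ennreal c1 * ennreal (u powr p) + ennreal c2 * ennreal (v powr q)"
        using c12 by (simp add: ennreal_plus ennreal_mult)
      ultimately show ?thesis using u v c12
        by (simp add: epowr_ennreal ennreal_mult)
    qed
    have "?L \<le> infsum (\<lambda>x. ennreal c1 * epowr (F x) p + ennreal c2 * epowr (G x) q) A"
      by (rule einfsum_mono) (rule pw)
    also have "\<dots> = ennreal c1 * ?SF + ennreal c2 * ?SG"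
      by (simp add: einfsum_add einfsum_cmult_left)
    also have "\<dots> = ennreal (c1 * sf + c2 * sg)"
      using sf sg c12 by (simp add: ennreal_plus ennreal_mult)
    also have "c1 * sf + c2 * sg = a * b"
      using sf sg pq by (simp add: c1_def c2_def field_simps)
    also have "ennreal (a * b) = epowr ?SF (1 / p) * epowr ?SG (1 / q)"
      using sf sg a b by (simp add: a_def b_def epowr_ennreal ennreal_mult)
    finally show ?thesis .
  qed
qed



lemma opnorm_bound:
  fixes K :: "cfg \<Rightarrow> cfg \<Rightarrow> ennreal" and G :: "cfg \<Rightarrow> ennreal"
  assumes q: "q > 0"
  shows "lpnorm h q (\<lambda>z. infsum (\<lambda>x. K z x * G x) (cfgs h)) \<le> opnorm h q K * lpnorm h q G"
    (is "lpnorm h q ?KG \<le> _")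
proof (cases "lpnorm h q G = 0")
  case True
  then have "\<forall>x\<in>cfgs h. G x = 0" by (simp add: lpnorm_eq_0_iff)
  then have "\<forall>z. ?KG z = 0" by (simp add: einfsum_eq_0_iff)
  then have "lpnorm h q ?KG = 0" by (simp add: lpnorm_eq_0_iff)
  then show ?thesis by simp
next
  case nz: False
  show ?thesis
  proof (cases "lpnorm h q G = \<top>")
    case True
    show ?thesis
    proof (cases "opnorm h q K = 0")
      case False
      then show ?thesis using True by (simp add: ennreal_mult_eq_top_iff)
    next
      case op0: True
      have K0: "K z x = 0" if z: "z \<in> cfgs h" and x: "x \<in> cfgs h" for z x
      proof -
        define Gx where "Gx = (\<lambda>y::cfg. if y = x then (1::ennreal) else 0)"
        have "(\<lambda>y. epowr (Gx y) q) = Gx" by (auto simp: Gx_def)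
        then have "lpnorm h q Gx = 1"
          unfolding lpnorm_def using einfsum_indicator[OF x, of 1] by (simp add: Gx_def)
        then have "lpnorm h q (\<lambda>z. infsum (\<lambda>y. K z y * Gx y) (cfgs h)) \<le> opnorm h q K"
          unfolding opnorm_def by (intro SUP_upper) auto
        then have "lpnorm h q (\<lambda>z. infsum (\<lambda>y. K z y * Gx y) (cfgs h)) = 0" using op0 by simp
        then have "infsum (\<lambda>y. K z y * Gx y) (cfgs h) = 0" using z by (simp add: lpnorm_eq_0_iff)
        moreover have "infsum (\<lambda>y. K z y * Gx y) (cfgs h) = K z x"
          using einfsum_indicator[OF x, of "K z x"] by (simp add: Gx_def if_distrib cong: if_cong)
        ultimately show ?thesis by simp
      qed
      have "\<forall>z\<in>cfgs h. ?KG z = 0" using K0 by (simp add: einfsum_eq_0_iff)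
      then have "lpnorm h q ?KG = 0" by (simp add: lpnorm_eq_0_iff)
      then show ?thesis by simp
    qed
  next
    case False
    then obtain c where c: "lpnorm h q G = ennreal c" "c > 0"
      using nz by (cases "lpnorm h q G") (auto simp: ennreal_eq_0_iff)
    define G' where "G' = (\<lambda>x. ennreal (1 / c) * G x)"
    have "lpnorm h q G' = ennreal (1 / c) * ennreal c"
      unfolding G'_def using c q by (simp add: lpnorm_cmult)
    also have "\<dots> = 1" using c by (simp flip: ennreal_mult)
    finally have "lpnorm h q (\<lambda>z. infsum (\<lambda>x. K z x * G' x) (cfgs h)) \<le> opnorm h q K"
      unfolding opnorm_def by (intro SUP_upper) auto
    moreover have "(\<lambda>z. infsum (\<lambda>x. K z x * G' x) (cfgs h)) = (\<lambda>z. ennreal (1 / c) * ?KG z)"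
      unfolding G'_def by (subst einfsum_cmult_left[symmetric]) (simp add: mult.left_commute)
    ultimately have "ennreal (1 / c) * lpnorm h q ?KG \<le> opnorm h q K"
      using c q by (simp add: lpnorm_cmult)
    then have "ennreal c * (ennreal (1 / c) * lpnorm h q ?KG) \<le> ennreal c * opnorm h q K"
      by (rule mult_left_mono) simp
    moreover have "ennreal c * (ennreal (1 / c) * lpnorm h q ?KG) = lpnorm h q ?KG"
      using c by (simp add: mult.assoc[symmetric] flip: ennreal_mult)
    ultimately show ?thesis using c by (simp add: mult.commute)
  qed
qed

lemma kstep:
  fixes Kk :: "cfg \<Rightarrow> cfg \<Rightarrow> ennreal" and W :: "cfg \<Rightarrow> real"
  assumes q: "q > 0" and W: "\<forall>x\<in>cfgs h. W x > 0"
    and op: "opnorm h q (\<lambda>z x. ennreal (W z) * Kk z x * ennreal (1 / W x)) \<le> c"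
  shows "lpnorm h q (\<lambda>z. ennreal (W z) * infsum (\<lambda>x. Kk z x * \<phi> x) (cfgs h))
         \<le> c * lpnorm h q (\<lambda>x. ennreal (W x) * \<phi> x)"
proof -
  have eq: "ennreal (W z) * infsum (\<lambda>x. Kk z x * \<phi> x) (cfgs h)
     = infsum (\<lambda>x. (ennreal (W z) * Kk z x * ennreal (1 / W x)) * (ennreal (W x) * \<phi> x)) (cfgs h)" for z
  proof -
    have "ennreal (W z) * infsum (\<lambda>x. Kk z x * \<phi> x) (cfgs h)
        = infsum (\<lambda>x. ennreal (W z) * (Kk z x * \<phi> x)) (cfgs h)"
      by (simp add: einfsum_cmult_left)
    also have "\<dots> = infsum (\<lambda>x. (ennreal (W z) * Kk z x * ennreal (1 / W x)) * (ennreal (W x) * \<phi> x)) (cfgs h)"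
    proof (rule infsum_cong)
      fix x assume "x \<in> cfgs h"
      then have "W x > 0" using W by auto
      then have "ennreal (1 / W x) * ennreal (W x) = 1" by (simp flip: ennreal_mult)
      then show "ennreal (W z) * (Kk z x * \<phi> x) = ennreal (W z) * Kk z x * ennreal (1 / W x) * (ennreal (W x) * \<phi> x)"
        by (metis (no_types, lifting) mult.assoc mult.commute mult_1)
    qed
    finally show ?thesis .
  qed
  have "lpnorm h q (\<lambda>z. ennreal (W z) * infsum (\<lambda>x. Kk z x * \<phi> x) (cfgs h))
     \<le> opnorm h q (\<lambda>z x. ennreal (W z) * Kk z x * ennreal (1 / W x)) * lpnorm h q (\<lambda>x. ennreal (W x) * \<phi> x)"
    unfolding eq by (rule opnorm_bound[OF q])
  also have "\<dots> \<le> c * lpnorm h q (\<lambda>x. ennreal (W x) * \<phi> x)"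
    by (rule mult_right_mono[OF op]) simp
  finally show ?thesis .
qed



definition Tch :: "cfg set \<Rightarrow> (cfg \<Rightarrow> ennreal) \<Rightarrow> (nat \<Rightarrow> cfg \<Rightarrow> cfg \<Rightarrow> ennreal)
    \<Rightarrow> (nat \<Rightarrow> cfg \<Rightarrow> cfg \<Rightarrow> ennreal) \<Rightarrow> nat \<Rightarrow> (cfg \<Rightarrow> ennreal) \<Rightarrow> ennreal" where
  "Tch A qq0 Qk Uk r \<phi> = (\<Sum>\<^sub>\<infinity>(zs, zs')\<in>PiE {..<r} (\<lambda>_. A) \<times> PiE {..<r} (\<lambda>_. A).
      qq0 (zs 0) * Uk 0 (zs 0) (zs' 0) *
      (\<Prod>i\<in>{1..<r}. Qk i (zs' (i - 1)) (zs i) * Uk i (zs i) (zs' i)) * \<phi> (zs' (r - 1)))"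

lemma Tch_base:
  "Tch A qq0 Qk Uk 1 \<phi> \<le> infsum (\<lambda>z. qq0 z * infsum (\<lambda>z'. Uk 0 z z' * \<phi> z') A) A"
proof -
  define g where "g = (\<lambda>(z::cfg, z'::cfg). ((\<lambda>_. undefined)(0 := z) :: nat \<Rightarrow> cfg, (\<lambda>_. undefined)(0 := z') :: nat \<Rightarrow> cfg))"
  have bij: "bij_betw g (A \<times> A) (PiE {..<1::nat} (\<lambda>_. A) \<times> PiE {..<1::nat} (\<lambda>_. A))"
  proof (rule bij_betw_byWitness[where f' = "\<lambda>(zs, zs'). (zs 0, zs' 0)"])
    show "\<forall>a\<in>A \<times> A. (\<lambda>(zs, zs'). (zs 0, zs' 0)) (g a) = a" by (auto simp: g_def)
    show "\<forall>a'\<in>PiE {..<1::nat} (\<lambda>_. A) \<times> PiE {..<1::nat} (\<lambda>_. A). g ((\<lambda>(zs, zs'). (zs 0, zs' 0)) a') = a'"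
      by (auto simp: g_def PiE_iff extensional_def fun_eq_iff One_nat_def lessThan_Suc)
    show "g ` (A \<times> A) \<subseteq> PiE {..<1::nat} (\<lambda>_. A) \<times> PiE {..<1::nat} (\<lambda>_. A)"
      by (auto simp: g_def PiE_iff extensional_def)
    show "(\<lambda>(zs, zs'). (zs 0, zs' 0)) ` (PiE {..<1::nat} (\<lambda>_. A) \<times> PiE {..<1::nat} (\<lambda>_. A)) \<subseteq> A \<times> A"
      by (auto simp: PiE_iff dest: bspec[where x=0])
  qed
  have "Tch A qq0 Qk Uk 1 \<phi> = infsum (\<lambda>(z, z'). qq0 z * Uk 0 z z' * \<phi> z') (A \<times> A)"
    unfolding Tch_def
    by (subst infsum_reindex_bij_betw[OF bij, symmetric]) (simp add: g_def split_def)
  also have "\<dots> \<le> infsum (\<lambda>z. infsum (\<lambda>z'. qq0 z * Uk 0 z z' * \<phi> z') A) A"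
    using einfsum_Sigma_le[of "\<lambda>(z, z'). qq0 z * Uk 0 z z' * \<phi> z'" A "\<lambda>_. A"] by simp
  also have "\<dots> = infsum (\<lambda>z. qq0 z * infsum (\<lambda>z'. Uk 0 z z' * \<phi> z') A) A"
    by (simp add: mult.assoc einfsum_cmult_left)
  finally show ?thesis .
qed


lemma Tch_peel:
  assumes r: "r \<ge> 1"
  shows "Tch A qq0 Qk Uk (Suc r) \<phi> \<le>
    Tch A qq0 Qk Uk r (\<lambda>y. infsum (\<lambda>z. Qk r y z * infsum (\<lambda>z'. Uk r z z' * \<phi> z') A) A)"
proof -
  let ?E = "\<lambda>n. PiE {..<n} (\<lambda>_::nat. A)"
  define f where "f = (\<lambda>(zs :: nat \<Rightarrow> cfg, zs' :: nat \<Rightarrow> cfg).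
      qq0 (zs 0) * Uk 0 (zs 0) (zs' 0) *
      (\<Prod>i\<in>{1..<Suc r}. Qk i (zs' (i - 1)) (zs i) * Uk i (zs i) (zs' i)) * \<phi> (zs' (Suc r - 1)))"
  define ext where "ext = (\<lambda>((zs :: nat \<Rightarrow> cfg, zs' :: nat \<Rightarrow> cfg), (z :: cfg, z' :: cfg)). (zs(r := z), zs'(r := z')))"
  define C where "C = (\<lambda>(zs :: nat \<Rightarrow> cfg, zs' :: nat \<Rightarrow> cfg). qq0 (zs 0) * Uk 0 (zs 0) (zs' 0) *
      (\<Prod>i\<in>{1..<r}. Qk i (zs' (i - 1)) (zs i) * Uk i (zs i) (zs' i)))"
  define \<psi> where "\<psi> = (\<lambda>y. infsum (\<lambda>z. Qk r y z * infsum (\<lambda>z'. Uk r z z' * \<phi> z') A) A)"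
  have bij: "bij_betw ext ((?E r \<times> ?E r) \<times> (A \<times> A)) (?E (Suc r) \<times> ?E (Suc r))"
  proof (rule bij_betw_byWitness[where f' = "\<lambda>(zs, zs'). ((zs(r := undefined), zs'(r := undefined)), (zs r, zs' r))"])
    have Er: "\<And>zs. zs \<in> ?E r \<Longrightarrow> zs r = undefined" by (rule PiE_arb) auto
    show "\<forall>a\<in>(?E r \<times> ?E r) \<times> (A \<times> A). (\<lambda>(zs, zs'). ((zs(r := undefined), zs'(r := undefined)), (zs r, zs' r))) (ext a) = a"
    proof
      fix a assume a: "a \<in> (?E r \<times> ?E r) \<times> (A \<times> A)"
      obtain zs zs' z z' where aa: "a = ((zs, zs'), (z, z'))" by (metis prod.collapse)
      have "zs r = undefined" "zs' r = undefined" using a Er unfolding aa by auto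
      then show "(\<lambda>(zs, zs'). ((zs(r := undefined), zs'(r := undefined)), (zs r, zs' r))) (ext a) = a"
        unfolding aa ext_def by (simp add: fun_upd_idem)
    qed
    show "\<forall>a'\<in>?E (Suc r) \<times> ?E (Suc r). ext ((\<lambda>(zs, zs'). ((zs(r := undefined), zs'(r := undefined)), (zs r, zs' r))) a') = a'"
      by (simp add: ext_def split_beta)
    show "ext ` ((?E r \<times> ?E r) \<times> (A \<times> A)) \<subseteq> ?E (Suc r) \<times> ?E (Suc r)"
    proof
      fix b assume "b \<in> ext ` ((?E r \<times> ?E r) \<times> (A \<times> A))"
      then obtain zs zs' z z' where b: "b = ext ((zs, zs'), (z, z'))" and m: "zs \<in> ?E r" "zs' \<in> ?E r" "z \<in> A" "z' \<in> A"
        by auto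
      have "zs(r := z) \<in> PiE (insert r {..<r}) (\<lambda>_. A)" "zs'(r := z') \<in> PiE (insert r {..<r}) (\<lambda>_. A)"
        using m by (auto intro!: PiE_fun_upd)
      then show "b \<in> ?E (Suc r) \<times> ?E (Suc r)" unfolding b ext_def by (simp add: lessThan_Suc)
    qed
    show "(\<lambda>(zs, zs'). ((zs(r := undefined), zs'(r := undefined)), (zs r, zs' r))) ` (?E (Suc r) \<times> ?E (Suc r)) \<subseteq> (?E r \<times> ?E r) \<times> (A \<times> A)"
    proof
      fix b assume "b \<in> (\<lambda>(zs, zs'). ((zs(r := undefined), zs'(r := undefined)), (zs r, zs' r))) ` (?E (Suc r) \<times> ?E (Suc r))"
      then obtain zs zs' where b: "b = ((zs(r := undefined), zs'(r := undefined)), (zs r, zs' r))"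
        and m: "zs \<in> PiE (insert r {..<r}) (\<lambda>_. A)" "zs' \<in> PiE (insert r {..<r}) (\<lambda>_. A)"
        by (auto simp: lessThan_Suc)
      have "zs(r := undefined) \<in> ?E r" "zs'(r := undefined) \<in> ?E r"
        using m by (auto intro!: fun_upd_in_PiE)
      moreover have "zs r \<in> A" "zs' r \<in> A" using m by (auto simp: PiE_iff)
      ultimately show "b \<in> (?E r \<times> ?E r) \<times> (A \<times> A)" unfolding b by simp
    qed
  qed
  have fext: "f (ext ((zs, zs'), (z, z'))) = C (zs, zs') * (Qk r (zs' (r - 1)) z * (Uk r z z' * \<phi> z'))"
    for zs zs' z z'
  proof -
    have r0: "r \<noteq> 0" "r - 1 \<noteq> r" using r by auto
    have P: "(\<Prod>i\<in>{1..<Suc r}. Qk i ((zs'(r := z')) (i - 1)) ((zs(r := z)) i) * Uk i ((zs(r := z)) i) ((zs'(r := z')) i))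
       = (\<Prod>i\<in>{1..<r}. Qk i (zs' (i - 1)) (zs i) * Uk i (zs i) (zs' i)) * (Qk r (zs' (r - 1)) z * Uk r z z')"
    proof -
      have "(\<Prod>i\<in>{1..<Suc r}. Qk i ((zs'(r := z')) (i - 1)) ((zs(r := z)) i) * Uk i ((zs(r := z)) i) ((zs'(r := z')) i))
        = (\<Prod>i\<in>{1..<r}. Qk i ((zs'(r := z')) (i - 1)) ((zs(r := z)) i) * Uk i ((zs(r := z)) i) ((zs'(r := z')) i))
          * (Qk r ((zs'(r := z')) (r - 1)) ((zs(r := z)) r) * Uk r ((zs(r := z)) r) ((zs'(r := z')) r))"
        using r by (simp add: prod.atLeastLessThan_Suc)
      also have "(\<Prod>i\<in>{1..<r}. Qk i ((zs'(r := z')) (i - 1)) ((zs(r := z)) i) * Uk i ((zs(r := z)) i) ((zs'(r := z')) i))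
         = (\<Prod>i\<in>{1..<r}. Qk i (zs' (i - 1)) (zs i) * Uk i (zs i) (zs' i))"
        by (rule prod.cong) auto
      finally show ?thesis using r0 by simp
    qed
    have "f (ext ((zs, zs'), (z, z'))) = qq0 ((zs(r := z)) 0) * Uk 0 ((zs(r := z)) 0) ((zs'(r := z')) 0) *
      (\<Prod>i\<in>{1..<Suc r}. Qk i ((zs'(r := z')) (i - 1)) ((zs(r := z)) i) * Uk i ((zs(r := z)) i) ((zs'(r := z')) i))
      * \<phi> ((zs'(r := z')) (Suc r - 1))"
      unfolding f_def ext_def by (simp only: prod.case)
    also have "\<dots> = C (zs, zs') * (Qk r (zs' (r - 1)) z * (Uk r z z' * \<phi> z'))"
      unfolding P C_def using r0 by (simp add: ac_simps)
    finally show ?thesis .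
  qed
  have "Tch A qq0 Qk Uk (Suc r) \<phi> = infsum f (?E (Suc r) \<times> ?E (Suc r))"
    unfolding Tch_def f_def by simp
  also have "\<dots> = infsum (\<lambda>p. f (ext p)) ((?E r \<times> ?E r) \<times> (A \<times> A))"
    by (rule infsum_reindex_bij_betw[OF bij, symmetric])
  also have "\<dots> \<le> infsum (\<lambda>w. infsum (\<lambda>v. f (ext (w, v))) (A \<times> A)) (?E r \<times> ?E r)"
    using einfsum_Sigma_le[of "\<lambda>p. f (ext p)" "?E r \<times> ?E r" "\<lambda>_. A \<times> A"] by simp
  also have "\<dots> \<le> infsum (\<lambda>w. C w * \<psi> (snd w (r - 1))) (?E r \<times> ?E r)"
  proof (rule einfsum_mono)
    fix w assume "w \<in> ?E r \<times> ?E r"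
    obtain zs zs' where w: "w = (zs, zs')" by (cases w)
    have "infsum (\<lambda>v. f (ext (w, v))) (A \<times> A)
        = infsum (\<lambda>(z, z'). C w * (Qk r (zs' (r - 1)) z * (Uk r z z' * \<phi> z'))) (A \<times> A)"
      unfolding w by (rule infsum_cong) (auto simp: fext)
    also have "\<dots> = C w * infsum (\<lambda>(z, z'). Qk r (zs' (r - 1)) z * (Uk r z z' * \<phi> z')) (A \<times> A)"
      by (subst einfsum_cmult_left[symmetric]) (simp add: split_def)
    also have "\<dots> \<le> C w * infsum (\<lambda>z. infsum (\<lambda>z'. Qk r (zs' (r - 1)) z * (Uk r z z' * \<phi> z')) A) A"
      using einfsum_Sigma_le[of "\<lambda>(z, z'). Qk r (zs' (r - 1)) z * (Uk r z z' * \<phi> z')" A "\<lambda>_. A"]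
      by (intro mult_left_mono) auto
    also have "\<dots> = C w * \<psi> (snd w (r - 1))"
      unfolding \<psi>_def w by (simp add: einfsum_cmult_left)
    finally show "infsum (\<lambda>v. f (ext (w, v))) (A \<times> A) \<le> C w * \<psi> (snd w (r - 1))" .
  qed
  also have "\<dots> = Tch A qq0 Qk Uk r \<psi>"
    unfolding Tch_def C_def by (simp add: split_def)
  finally show ?thesis unfolding \<psi>_def .
qed



lemma chain_bound:
  fixes W :: "cfg \<Rightarrow> real"
  assumes pq: "p > 1" "q > 1" "1 / p + 1 / q = 1"
    and W: "\<forall>x\<in>cfgs h. W x > 0"
    and hF: "lpnorm h p (\<lambda>x. qq0 x * ennreal (1 / W x)) \<le> Fp"
    and hQ: "\<And>i. 1 \<le> i \<Longrightarrow> i < r \<Longrightarrow> opnorm h q (\<lambda>z x. ennreal (W z) * Qk i z x * ennreal (1 / W x)) \<le> Qn"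
    and hU: "\<And>i. i < r \<Longrightarrow> opnorm h q (\<lambda>z x. ennreal (W z) * Uk i z x * ennreal (1 / W x)) \<le> Uo"
    and r: "1 \<le> r"
  shows "\<forall>\<phi>. Tch (cfgs h) qq0 Qk Uk r \<phi> \<le> Fp * Qn ^ (r - 1) * Uo ^ r * lpnorm h q (\<lambda>x. ennreal (W x) * \<phi> x)"
  using r
proof (induction r rule: dec_induct)
  case base
  show ?case
  proof
    fix \<phi> :: "cfg \<Rightarrow> ennreal"
    let ?U = "\<lambda>z. infsum (\<lambda>z'. Uk 0 z z' * \<phi> z') (cfgs h)"
    have "Tch (cfgs h) qq0 Qk Uk 1 \<phi> \<le> infsum (\<lambda>z. qq0 z * ?U z) (cfgs h)"
      by (rule Tch_base)
    also have "\<dots> = infsum (\<lambda>z. (qq0 z * ennreal (1 / W z)) * (ennreal (W z) * ?U z)) (cfgs h)"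
    proof (rule infsum_cong)
      fix z assume "z \<in> cfgs h"
      then have "W z > 0" using W by auto
      then have "ennreal (1 / W z) * ennreal (W z) = 1" by (simp flip: ennreal_mult)
      then show "qq0 z * ?U z = (qq0 z * ennreal (1 / W z)) * (ennreal (W z) * ?U z)"
        by (metis (no_types, lifting) mult.assoc mult_1_right)
    qed
    also have "\<dots> \<le> lpnorm h p (\<lambda>x. qq0 x * ennreal (1 / W x)) * lpnorm h q (\<lambda>z. ennreal (W z) * ?U z)"
      unfolding lpnorm_def by (rule holder[OF pq])
    also have "\<dots> \<le> Fp * (Uo * lpnorm h q (\<lambda>x. ennreal (W x) * \<phi> x))"
      by (rule mult_mono[OF hF kstep]) (use pq W hU r in auto)
    finally show "Tch (cfgs h) qq0 Qk Uk 1 \<phi> \<le> Fp * Qn ^ (1 - 1) * Uo ^ 1 * lpnorm h q (\<lambda>x. ennreal (W x) * \<phi> x)"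
      by (simp add: mult.assoc)
  qed
next
  case (step n)
  show ?case
  proof
    fix \<phi> :: "cfg \<Rightarrow> ennreal"
    let ?U = "\<lambda>z. infsum (\<lambda>z'. Uk n z z' * \<phi> z') (cfgs h)"
    let ?\<psi> = "\<lambda>y. infsum (\<lambda>z. Qk n y z * ?U z) (cfgs h)"
    let ?N = "\<lambda>F. lpnorm h q (\<lambda>x. ennreal (W x) * F x)"
    have "Tch (cfgs h) qq0 Qk Uk (Suc n) \<phi> \<le> Tch (cfgs h) qq0 Qk Uk n ?\<psi>"
      by (rule Tch_peel) (use step in auto)
    also have "\<dots> \<le> Fp * Qn ^ (n - 1) * Uo ^ n * ?N ?\<psi>"
      using step.IH by blast
    also have "?N ?\<psi> \<le> Qn * ?N ?U"
      by (rule kstep) (use pq W hQ step in auto)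
    also have "?N ?U \<le> Uo * ?N \<phi>"
      by (rule kstep) (use pq W hU step in auto)
    finally have "Tch (cfgs h) qq0 Qk Uk (Suc n) \<phi> \<le> Fp * Qn ^ (n - 1) * Uo ^ n * (Qn * (Uo * ?N \<phi>))"
      by (simp add: mult_left_mono)
    moreover have "Fp * Qn ^ (n - 1) * Uo ^ n * (Qn * (Uo * ?N \<phi>)) = Fp * Qn ^ (Suc n - 1) * Uo ^ Suc n * ?N \<phi>"
    proof -
      obtain m where m: "n = Suc m" using step by (cases n) auto
      show ?thesis unfolding m by (simp add: ac_simps)
    qed
    ultimately show "Tch (cfgs h) qq0 Qk Uk (Suc n) \<phi> \<le> Fp * Qn ^ (Suc n - 1) * Uo ^ Suc n * ?N \<phi>"
      by simp
  qed
qed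



theorem theorem4p10:
  fixes M :: "real measure" and \<beta> lam p q :: real and h L r :: nat
    and f g :: "int \<times> int \<Rightarrow> real" and W :: "cfg \<Rightarrow> real"
  assumes "prob_space M" and "sets M = sets borel"
    and "integrable M (\<lambda>\<omega>. \<omega> ^ 2)"
    and "(\<integral>\<omega>. \<omega> \<partial>M) = 0" and "(\<integral>\<omega>. \<omega> ^ 2 \<partial>M) = 1"
    and "integrable M (\<lambda>\<omega>. exp (\<beta> * \<omega>))"
    and "2 \<le> h" and "\<beta> > 0" and "lam \<ge> 0"
    and "\<forall>x\<in>cfgs h. W x > 0"
    and "p > 1" and "q > 1" and "1 / p + 1 / q = 1"
  shows "Xi M \<beta> h L lam f g r \<le> fnormmax h L p f W * gnormmax h L q g W * Xi_bulk M \<beta> h L lam q W r"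
proof (cases "r = 0")
  case True
  have "admissible h r = {}"
  proof -
    have "\<not> full_support h []" using assms(7) by (auto simp: full_support_def)
    then show ?thesis using True by (auto simp: admissible_def)
  qed
  then show ?thesis by (simp add: Xi_def)
next
  case False
  then have r: "1 \<le> r" by simp
  have W: "\<forall>x\<in>cfgs h. W x > 0" and pq: "p > 1" "q > 1" "1 / p + 1 / q = 1" using assms by auto
  let ?F = "fnormmax h L p f W" and ?G = "gnormmax h L q g W"
    and ?Q = "Qnormmax h L q W" and ?U = "Unormmax M \<beta> h L lam q W"
  let ?c = "\<lambda>Is. ennreal (\<Prod>i<r. \<bar>Exi M \<beta> (Is ! i)\<bar>)"
  let ?S = "\<lambda>Is. (\<Sum>\<^sub>\<infinity>(zs, zs')\<in>PiE {..<r} (\<lambda>_. cfgs h) \<times> PiE {..<r} (\<lambda>_. cfgs h).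
         qqhat h (\<lambda>z. \<bar>f z\<bar>) (Is ! 0) L (zs 0) * Uhat M \<beta> h (Is ! 0) L lam (zs 0) (zs' 0) *
         (\<Prod>i\<in>{1..<r}. QQhat h (Is ! (i - 1)) (Is ! i) L (zs' (i - 1)) (zs i) *
                         Uhat M \<beta> h (Is ! i) L lam (zs i) (zs' i)) *
         qqbar h (\<lambda>z. \<bar>g z\<bar>) (Is ! (r - 1)) L (zs' (r - 1)))"
  have Sb: "?S Is \<le> ?F * ?Q ^ (r - 1) * ?U ^ r * ?G" if Is: "Is \<in> admissible h r" for Is
  proof -
    have len: "length Is = r" and sub: "set Is \<subseteq> partitions h" and ns: "\<forall>I\<in>set Is. I \<noteq> star h"
      and neq: "\<And>i. 0 < i \<Longrightarrow> i < r \<Longrightarrow> Is ! i \<noteq> Is ! (i - 1)"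
      using Is by (auto simp: admissible_def)
    have mem: "Is ! i \<in> nonstar h" if "i < r" for i
      using that len sub ns nth_mem[of i Is] by (auto simp: nonstar_def)
    have hF: "lpnorm h p (\<lambda>x. qqhat h (\<lambda>z. \<bar>f z\<bar>) (Is ! 0) L x * ennreal (1 / W x)) \<le> ?F"
      unfolding fnormmax_def by (rule SUP_upper) (use mem r in auto)
    have hQ: "opnorm h q (\<lambda>z x. ennreal (W z) * QQhat h (Is ! (i - 1)) (Is ! i) L z x * ennreal (1 / W x)) \<le> ?Q"
      if i: "1 \<le> i" "i < r" for i
    proof -
      have m: "(Is ! (i - 1), Is ! i) \<in> {(I, J). I \<in> nonstar h \<and> J \<in> nonstar h \<and> I \<noteq> J}"
        using mem[of i] mem[of "i - 1"] neq[of i] i by auto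
      show ?thesis
        using SUP_upper[OF m, of "\<lambda>IJ. opnorm h q (\<lambda>z x. ennreal (W z) * QQhat h (fst IJ) (snd IJ) L z x * ennreal (1 / W x))"]
        unfolding Qnormmax_def by simp
    qed
    have hU: "opnorm h q (\<lambda>z x. ennreal (W z) * Uhat M \<beta> h (Is ! i) L lam z x * ennreal (1 / W x)) \<le> ?U"
      if i: "i < r" for i
      unfolding Unormmax_def by (rule SUP_upper) (use mem i in auto)
    have hG: "lpnorm h q (\<lambda>x. ennreal (W x) * qqbar h (\<lambda>z. \<bar>g z\<bar>) (Is ! (r - 1)) L x) \<le> ?G"
      unfolding gnormmax_def by (rule SUP_upper) (use mem r in auto)
    have "?S Is = Tch (cfgs h) (qqhat h (\<lambda>z. \<bar>f z\<bar>) (Is ! 0) L) (\<lambda>i. QQhat h (Is ! (i - 1)) (Is ! i) L)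
        (\<lambda>i. Uhat M \<beta> h (Is ! i) L lam) r (qqbar h (\<lambda>z. \<bar>g z\<bar>) (Is ! (r - 1)) L)"
      unfolding Tch_def by simp
    also have "\<dots> \<le> ?F * ?Q ^ (r - 1) * ?U ^ r * lpnorm h q (\<lambda>x. ennreal (W x) * qqbar h (\<lambda>z. \<bar>g z\<bar>) (Is ! (r - 1)) L x)"
      by (rule chain_bound[where Qk = "\<lambda>i. QQhat h (Is ! (i - 1)) (Is ! i) L"
            and Uk = "\<lambda>i. Uhat M \<beta> h (Is ! i) L lam" and Qn = ?Q and Uo = ?U and r = r,
            OF pq W hF hQ hU r, rule_format])
    also have "\<dots> \<le> ?F * ?Q ^ (r - 1) * ?U ^ r * ?G"
      by (rule mult_left_mono[OF hG]) simp
    finally show ?thesis .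
  qed
  have "Xi M \<beta> h L lam f g r = (\<Sum>Is\<in>admissible h r. ?c Is * ?S Is)"
    unfolding Xi_def by simp
  also have "\<dots> \<le> (\<Sum>Is\<in>admissible h r. ?c Is * (?F * ?Q ^ (r - 1) * ?U ^ r * ?G))"
    by (rule sum_mono) (rule mult_left_mono[OF Sb]; simp)
  also have "\<dots> = (\<Sum>Is\<in>admissible h r. (?F * ?G) * (?c Is * ?Q ^ (r - 1) * ?U ^ r))"
    by (rule sum.cong) (simp_all add: ac_simps)
  also have "\<dots> = ?F * ?G * Xi_bulk M \<beta> h L lam q W r"
    unfolding Xi_bulk_def by (simp add: sum_distrib_left)
  finally show ?thesis .
qed


end
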